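(* Let $n,d,k$ be integers with $0\le k<d\le n$. The map $T\mapsto\mathfrak{b}(T)$ is a bijection from $\mathcal{T}(n,d,k)$ onto $\mathcal{B}(n,d,k)$, and both sets have cardinality $\binom{n-k-1}{d-k-1}$.
   Context: For a graph $G$, $S(G)$ is obtained by adding a new vertex adjacent to all vertices of $G$, and $D(G)$ by adding a new isolated vertex. For a word $w=w_1\cdots w_n$ over $\{S,D\}$ with $w_n=S$, the threshold graph with word $w$ is $w_1(w_2(\cdots w_n(\emptyset)\cdots))$, $\emptyset$ being the graph with no vertices; every threshold graph arises from exactly one such word. The $b$-vector $\mathfrak{b}(T)=(b_1,\ldots,b_d)$ of a threshold graph $T$ with word $w$ containing $d$ letters $S$: insert a separator right after every $S$ in $w$, cutting $w$ into $d$ consecutive subwords read left to right, and let $b_i$ be the length of the $i$-th subword. A graph is $k$-connected if it has at least $k$ vertices and removing any set of fewer than $k$ vertices leaves a connected graph (every graph is $0$-connected). $\mathcal{T}(n,d,k)$ is the set of $k$-connected threshold graphs on $n$ vertices with clique number $d$. $\mathcal{B}(n,d,k)$ is the set of vectors $(b_1,\ldots,b_d)$ of positive integers with $\sum_i b_i=n$ and $b_1=\cdots=b_k=1$. *)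

theory Defs
  imports Main
begin

(* Simple graphs: a vertex set together with a symmetric, irreflexive adjacency relation. *)
type_synonym graph = "nat set \<times> (nat \<Rightarrow> nat \<Rightarrow> bool)"

datatype letter = S | D

definition opS :: "nat \<Rightarrow> graph \<Rightarrow> graph" where
  "opS v G = (insert v (fst G),
     (\<lambda>x y. snd G x y \<or> (x = v \<and> y \<in> fst G) \<or> (y = v \<and> x \<in> fst G)))"

definition opD :: "nat \<Rightarrow> graph \<Rightarrow> graph" where
  "opD v G = (insert v (fst G), snd G)"

(* graph with word w = w_1 ... w_n is w_1(w_2(... w_n(empty))); the vertex added by the
   letter at list position i gets label (length w - 1 - i), which is fresh *)
fun thr :: "letter list \<Rightarrow> graph" where
  "thr [] = ({}, (\<lambda>_ _. False))"
| "thr (l # w) = (if l = S then opS (length w) (thr w) else opD (length w) (thr w))"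

definition threshold_word :: "letter list \<Rightarrow> bool" where
  "threshold_word w \<longleftrightarrow> w \<noteq> [] \<and> last w = S"

(* b-vector: cut after every S, record the lengths of the pieces *)
fun blocks :: "nat \<Rightarrow> letter list \<Rightarrow> nat list" where
  "blocks acc [] = []"
| "blocks acc (S # w) = (acc + 1) # blocks 0 w"
| "blocks acc (D # w) = blocks (acc + 1) w"

definition bvec :: "letter list \<Rightarrow> nat list" where
  "bvec w = blocks 0 w"

definition connected_on :: "(nat \<Rightarrow> nat \<Rightarrow> bool) \<Rightarrow> nat set \<Rightarrow> bool" where
  "connected_on E V \<longleftrightarrow>
     (\<forall>u\<in>V. \<forall>v\<in>V. (\<lambda>x y. x \<in> V \<and> y \<in> V \<and> E x y)\<^sup>*\<^sup>* u v)"

definition k_connected :: "graph \<Rightarrow> nat \<Rightarrow> bool" where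
  "k_connected G k \<longleftrightarrow> k \<le> card (fst G) \<and>
     (\<forall>X. X \<subseteq> fst G \<and> card X < k \<longrightarrow> connected_on (snd G) (fst G - X))"

definition is_clique :: "graph \<Rightarrow> nat set \<Rightarrow> bool" where
  "is_clique G C \<longleftrightarrow> C \<subseteq> fst G \<and> (\<forall>x\<in>C. \<forall>y\<in>C. x \<noteq> y \<longrightarrow> snd G x y)"

definition clique_number :: "graph \<Rightarrow> nat" where
  "clique_number G = Max {card C | C. is_clique G C}"

(* T(n,d,k), threshold graphs represented by their (unique) words *)
definition Tset :: "nat \<Rightarrow> nat \<Rightarrow> nat \<Rightarrow> letter list set" where
  "Tset n d k = {w. threshold_word w \<and> length w = n \<and>
      k_connected (thr w) k \<and> clique_number (thr w) = d}"

definition Bset :: "nat \<Rightarrow> nat \<Rightarrow> nat \<Rightarrow> nat list set" where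
  "Bset n d k = {b. length b = d \<and> (\<forall>i<d. 0 < b ! i) \<and> sum_list b = n \<and>
      (\<forall>i<k. b ! i = 1)}"

end

theory Submission
  imports Defs
begin


lemma thr_fst: "fst (thr w) = {..<length w}"
proof (induction w)
  case (Cons l w)
  then show ?case by (cases l) (simp_all add: opS_def opD_def lessThan_Suc)
qed simp

lemma thr_snd: "snd (thr w) x y \<longleftrightarrow> x < length w \<and> y < length w \<and> x \<noteq> y \<and> rev w ! max x y = S"
proof (induction w arbitrary: x y)
  case Nil
  then show ?case by simp
next
  case (Cons l w)
  define m where "m = length w"
  have nth: "(rev w @ [l]) ! j = (if j < m then rev w ! j else l)" if "j < Suc m" for j
    using that unfolding m_def by (simp add: nth_append)
  have sn: "snd (thr (l # w)) x y = (if l = S then snd (thr w) x y \<or> (x = m \<and> y < m) \<or> (y = m \<and> x < m)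
     else snd (thr w) x y)"
    using thr_fst[of w] unfolding m_def by (simp add: opS_def opD_def)
  show ?case
  proof (cases "x < m \<and> y < m")
    case True
    then show ?thesis using Cons.IH[of x y] sn nth[of "max x y"] unfolding m_def
      by (simp add: max_def)
  next
    case False
    then have ni: "\<not> snd (thr w) x y" using Cons.IH[of x y] unfolding m_def by auto
    show ?thesis
    proof (cases "x < Suc m \<and> y < Suc m \<and> x \<noteq> y")
      case True
      then have "max x y = m" using False by (auto simp: max_def)
      then show ?thesis using True False ni sn nth[of m] unfolding m_def by (cases l) auto
    next
      case F2: False
      then show ?thesis using ni sn unfolding m_def by auto
    qed
  qed
qed

definition cntS :: "letter list \<Rightarrow> nat" where
  "cntS w = length (filter (\<lambda>l. l = S) w)"

lemma rev0: "threshold_word w \<Longrightarrow> rev w ! 0 = S"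
  unfolding threshold_word_def
  by (metis hd_conv_nth hd_rev rev_is_Nil_conv)

lemma clique_num:
  assumes th: "threshold_word w"
  shows "clique_number (thr w) = cntS w"
proof -
  define m where "m = length w"
  define Sv where "Sv = {v. v < m \<and> rev w ! v = S}"
  have r0: "rev w ! 0 = S" using rev0[OF th] .
  have m0: "0 < m" using th unfolding threshold_word_def m_def by simp
  have finSv: "finite Sv" unfolding Sv_def by simp
  have cardSv: "card Sv = cntS w"
    unfolding Sv_def cntS_def m_def
    using length_filter_conv_card[of "\<lambda>l. l = S" "rev w"] by (simp add: rev_filter[symmetric])
  have clSv: "is_clique (thr w) Sv"
    unfolding is_clique_def thr_fst thr_snd Sv_def m_def by (auto simp: max_def)
  have bound: "card C \<le> card Sv" if C: "is_clique (thr w) C" for C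
  proof (cases "C \<subseteq> Sv")
    case True
    then show ?thesis using card_mono finSv by blast
  next
    case False
    then obtain x where x: "x \<in> C" "x \<notin> Sv" by blast
    have xm: "x < m" using C x unfolding is_clique_def thr_fst m_def by auto
    have rx: "rev w ! x \<noteq> S" using x xm unfolding Sv_def by auto
    have "C \<subseteq> insert x (Sv - {0})"
    proof
      fix y assume y: "y \<in> C"
      show "y \<in> insert x (Sv - {0})"
      proof (cases "y = x")
        case False
        then have e: "rev w ! max x y = S" "y < m"
          using C x y unfolding is_clique_def thr_snd m_def by auto
        then have "x < y" using rx False by (auto simp: max_def split: if_splits)
        then show ?thesis using e unfolding Sv_def by (auto simp: max_def)
      qed simp
    qed
    then have "card C \<le> card (insert x (Sv - {0}))"
      using finSv by (intro card_mono) auto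
    also have "\<dots> \<le> Suc (card (Sv - {0}))" by (simp add: card_insert_le_m1)
    also have "\<dots> = card Sv" using finSv r0 m0 unfolding Sv_def
      by (intro card_Suc_Diff1) auto
    finally show ?thesis .
  qed
  have "Max {card C |C. is_clique (thr w) C} = card Sv"
  proof (rule Max_eqI)
    show "finite {card C |C. is_clique (thr w) C}"
      by (rule finite_subset[of _ "{..card Sv}"]) (auto dest: bound)
  qed (use bound clSv in auto)
  then show ?thesis unfolding clique_number_def cardSv .
qed

lemma kconn:
  assumes th: "threshold_word w" and km: "k \<le> length w"
  shows "k_connected (thr w) k \<longleftrightarrow> (\<forall>i<k. w ! i = S)"
proof -
  define m where "m = length w"
  have r0: "rev w ! 0 = S" using rev0[OF th] .
  have m0: "0 < m" using th unfolding threshold_word_def m_def by simp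
  show ?thesis
  proof
    assume kc: "k_connected (thr w) k"
    show "\<forall>i<k. w ! i = S"
    proof (rule ccontr)
      assume "\<not> (\<forall>i<k. w ! i = S)"
      then obtain i where i: "i < k" "w ! i \<noteq> S" by auto
      define X where "X = {m - i..<m}"
      have "X \<subseteq> fst (thr w)" "card X < k" using i km unfolding X_def thr_fst m_def by auto
      then have conn: "connected_on (snd (thr w)) (fst (thr w) - X)"
        using kc unfolding k_connected_def by blast
      have V: "fst (thr w) - X = {..<m - i}" unfolding thr_fst X_def m_def by auto
      define x where "x = m - 1 - i"
      have xin: "x \<in> {..<m - i}" "0 \<in> {..<m - i}" using i km unfolding x_def m_def by auto
      have rx: "rev w ! x \<noteq> S" using i km unfolding x_def m_def
        by (simp add: rev_nth Suc_diff_Suc)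
      have x0: "x \<noteq> 0" using rx r0 by metis
      have "(\<lambda>a b. a \<in> {..<m - i} \<and> b \<in> {..<m - i} \<and> snd (thr w) a b)\<^sup>*\<^sup>* 0 x"
        using conn xin unfolding connected_on_def V by blast
      then obtain y where y: "y \<in> {..<m - i}" "snd (thr w) y x"
        using x0 by (cases rule: rtranclp.cases) auto
      have "y \<le> x" using y(1) unfolding x_def by auto
      then have "max y x = x" by simp
      then show False using rx y(2) unfolding thr_snd by auto
    qed
  next
    assume H: "\<forall>i<k. w ! i = S"
    have winS: "rev w ! u = S" if "m - k \<le> u" "u < m" for u
    proof -
      have "rev w ! u = w ! (m - Suc u)" using that unfolding m_def by (simp add: rev_nth)
      moreover have "m - Suc u < k" using that km unfolding m_def by linarith
      ultimately show ?thesis using H by simp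
    qed
    show "k_connected (thr w) k"
      unfolding k_connected_def
    proof (intro conjI allI impI)
      show "k \<le> card (fst (thr w))" using km by (simp add: thr_fst)
      fix X assume X: "X \<subseteq> fst (thr w) \<and> card X < k"
      have "\<not> {m - k..<m} \<subseteq> X"
      proof
        assume "{m - k..<m} \<subseteq> X"
        then have "card {m - k..<m} \<le> card X"
          using X by (intro card_mono) (auto simp: thr_fst intro: finite_subset)
        then show False using X km unfolding m_def by simp
      qed
      then obtain v where v: "m - k \<le> v" "v < m" "v \<notin> X" by (auto simp: subset_iff)
      define V where "V = fst (thr w) - X"
      define P where "P = (\<lambda>a b. a \<in> V \<and> b \<in> V \<and> snd (thr w) a b)"
      have vV: "v \<in> V" using v unfolding V_def thr_fst m_def by auto
      have hub: "P\<^sup>*\<^sup>* a v \<and> P\<^sup>*\<^sup>* v a" if a: "a \<in> V" for a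
      proof (cases "a = v")
        case False
        have am: "a < m" using a unfolding V_def thr_fst m_def by auto
        have "rev w ! max a v = S" using winS v am by (auto simp: max_def)
        then have "P a v" "P v a" using a vV am v False unfolding P_def thr_snd m_def
          by (auto simp: max.commute)
        then show ?thesis by auto
      qed simp
      show "connected_on (snd (thr w)) (fst (thr w) - X)"
        unfolding connected_on_def
      proof (intro ballI)
        fix a b assume "a \<in> fst (thr w) - X" "b \<in> fst (thr w) - X"
        then have "P\<^sup>*\<^sup>* a b" using hub unfolding V_def[symmetric]
          by (meson rtranclp_trans)
        then show "(\<lambda>x y. x \<in> fst (thr w) - X \<and> y \<in> fst (thr w) - X \<and> snd (thr w) x y)\<^sup>*\<^sup>* a b"
          unfolding P_def V_def .
      qed
    qed
  qed
qed



fun dec :: "nat list \<Rightarrow> letter list" where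
  "dec [] = []"
| "dec (b # bs) = replicate (b - 1) D @ S # dec bs"

lemma blocks_len: "length (blocks a w) = cntS w"
  by (induction a w rule: blocks.induct) (auto simp: cntS_def)

lemma blocks_pos: "x \<in> set (blocks a w) \<Longrightarrow> 0 < x"
  by (induction a w rule: blocks.induct) auto

lemma blocks_hd: "blocks a w \<noteq> [] \<Longrightarrow> a + 1 \<le> hd (blocks a w)"
  by (induction a w rule: blocks.induct) auto

lemma blocks_sum: "w \<noteq> [] \<Longrightarrow> last w = S \<Longrightarrow> sum_list (blocks a w) = a + length w"
  by (induction a w rule: blocks.induct) (auto split: if_splits)

lemma dec_blocks: "(w = [] \<and> a = 0) \<or> (w \<noteq> [] \<and> last w = S) \<Longrightarrow> dec (blocks a w) = replicate a D @ w"
proof (induction a w rule: blocks.induct)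
  case (2 acc w)
  then show ?case by (cases "w = []") auto
next
  case (3 acc w)
  then show ?case by (cases "w = []") (auto simp: replicate_append_same)
qed auto

lemma blocks_rep: "blocks a (replicate c D @ S # u) = (a + c + 1) # blocks 0 u"
  by (induction c arbitrary: a) auto

lemma blocks_dec: "\<forall>x\<in>set b. 0 < x \<Longrightarrow> blocks 0 (dec b) = b"
  by (induction b) (auto simp: blocks_rep)

lemma dec_len: "\<forall>x\<in>set b. 0 < x \<Longrightarrow> length (dec b) = sum_list b"
  by (induction b) auto

lemma dec_Nil: "dec b = [] \<longleftrightarrow> b = []"
  by (cases b) auto

lemma dec_last: "b \<noteq> [] \<Longrightarrow> dec b \<noteq> [] \<and> last (dec b) = S"
  by (induction b) (auto simp: dec_Nil)

lemma bvec_prefix: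
  assumes "k \<le> length (bvec w)"
  shows "(\<forall>i<k. bvec w ! i = 1) \<longleftrightarrow> (\<forall>i<k. w ! i = S)"
  using assms
proof (induction k arbitrary: w)
  case (Suc k)
  show ?case
  proof (cases w)
    case Nil
    then show ?thesis using Suc by (simp add: bvec_def)
  next
    case (Cons l w')
    show ?thesis
    proof (cases l)
      case S
      then show ?thesis using Suc Cons by (simp add: bvec_def All_less_Suc2)
    next
      case D
      have ne: "blocks 1 w' \<noteq> []" using Suc Cons D by (auto simp: bvec_def)
      have "2 \<le> hd (blocks 1 w')" using blocks_hd[OF ne] by simp
      then have "bvec w ! 0 \<noteq> 1" using ne Cons D by (simp add: bvec_def hd_conv_nth)
      then show ?thesis using Cons D by (auto simp: All_less_Suc2)
    qed
  qed
qed simp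

definition Wset :: "nat \<Rightarrow> nat \<Rightarrow> nat \<Rightarrow> letter list set" where
  "Wset n d k = {w. threshold_word w \<and> length w = n \<and> (\<forall>i<k. w ! i = S) \<and> cntS w = d}"

lemma Tset_eq: assumes "k < d" shows "Tset n d k = Wset n d k"
proof (rule set_eqI)
  fix w
  show "w \<in> Tset n d k \<longleftrightarrow> w \<in> Wset n d k"
  proof (cases "threshold_word w \<and> cntS w = d")
    case True
    have "cntS w \<le> length w" unfolding cntS_def by (rule length_filter_le)
    then have kl: "k \<le> length w" using True assms by linarith
    have c: "clique_number (thr w) = d" using True clique_num[of w] by simp
    have kc: "k_connected (thr w) k \<longleftrightarrow> (\<forall>i<k. w ! i = S)" using True kl kconn[of w k] by simp
    show ?thesis unfolding Tset_def Wset_def mem_Collect_eq c kc using True by simp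
  next
    case False
    show ?thesis
    proof (cases "threshold_word w")
      case True
      then have "clique_number (thr w) \<noteq> d" "cntS w \<noteq> d" using False clique_num[of w] by auto
      then show ?thesis unfolding Tset_def Wset_def by simp
    next
      case F: False
      then show ?thesis unfolding Tset_def Wset_def by simp
    qed
  qed
qed

lemma bij_W: assumes "k < d" shows "bij_betw bvec (Wset n d k) (Bset n d k)"
proof (rule bij_betw_byWitness[where f'=dec])
  show "\<forall>a\<in>Wset n d k. dec (bvec a) = a"
  proof
    fix w assume "w \<in> Wset n d k"
    then have "w \<noteq> [] \<and> last w = S" unfolding Wset_def threshold_word_def by auto
    then show "dec (bvec w) = w" using dec_blocks[of w 0] unfolding bvec_def by simp
  qed
  show "\<forall>a'\<in>Bset n d k. bvec (dec a') = a'"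
  proof
    fix b assume b: "b \<in> Bset n d k"
    have pos: "\<forall>x\<in>set b. 0 < x" using b by (auto simp: Bset_def in_set_conv_nth)
    show "bvec (dec b) = b" using pos by (simp add: bvec_def blocks_dec)
  qed
  show "bvec ` Wset n d k \<subseteq> Bset n d k"
  proof
    fix b assume "b \<in> bvec ` Wset n d k"
    then obtain w where w: "w \<in> Wset n d k" "b = bvec w" by auto
    have len: "length b = d" using w by (simp add: Wset_def bvec_def blocks_len)
    have pos: "\<forall>i<length b. 0 < b ! i"
    proof (intro allI impI)
      fix i assume "i < length b"
      then have "b ! i \<in> set (blocks 0 w)" using w(2) unfolding bvec_def by simp
      then show "0 < b ! i" by (rule blocks_pos)
    qed
    have wW: "threshold_word w" "length w = n" "\<forall>i<k. w ! i = S" using w(1) unfolding Wset_def by auto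
    have sum: "sum_list b = n" using w(2) wW blocks_sum[of w 0] unfolding bvec_def threshold_word_def by simp
    have pre: "\<forall>i<k. b ! i = 1" using bvec_prefix[of k w] w(2) len assms wW(3) by simp
    show "b \<in> Bset n d k"
      unfolding Bset_def using len pos sum pre by simp
  qed
  show "dec ` Bset n d k \<subseteq> Wset n d k"
  proof
    fix w assume "w \<in> dec ` Bset n d k"
    then obtain b where b: "b \<in> Bset n d k" "w = dec b" by auto
    have pos: "\<forall>x\<in>set b. 0 < x" using b by (auto simp: Bset_def in_set_conv_nth)
    have bw: "bvec w = b" using b pos by (simp add: bvec_def blocks_dec)
    have ne: "b \<noteq> []" using b assms by (auto simp: Bset_def)
    have bl: "length b = d" "sum_list b = n" "\<forall>i<k. b ! i = 1" using b(1) unfolding Bset_def by auto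
    have c: "cntS w = d" using bw bl(1) blocks_len[of 0 w] unfolding bvec_def by simp
    have kd: "k \<le> length (bvec w)" using bw bl(1) assms by simp
    have p: "\<forall>i<k. w ! i = S" using bvec_prefix[OF kd] bw bl(3) by simp
    have th: "threshold_word w" using dec_last[OF ne] b(2) unfolding threshold_word_def by simp
    have ln: "length w = n" using dec_len[OF pos] b(2) bl(2) by simp
    show "w \<in> Wset n d k"
      unfolding Wset_def using th ln p c by simp
  qed
qed



lemma cnt_card: "cntS w = card {i. i < length w \<and> w ! i = S}"
  unfolding cntS_def by (rule length_filter_conv_card)

lemma cnt_decomp:
  assumes "length w = n" "k < n" "\<forall>i<k. w ! i = S" "w ! (n - 1) = S"
  shows "cntS w = k + 1 + card {i. k \<le> i \<and> i < n - 1 \<and> w ! i = S}"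
proof -
  define F where "F = {i. k \<le> i \<and> i < n - 1 \<and> w ! i = S}"
  have eq: "{i. i < length w \<and> w ! i = S} = {..<k} \<union> insert (n - 1) F"
  proof (rule set_eqI)
    fix i
    show "i \<in> {i. i < length w \<and> w ! i = S} \<longleftrightarrow> i \<in> {..<k} \<union> insert (n - 1) F"
      using assms unfolding F_def by (cases "i < k"; cases "i = n - 1") auto
  qed
  have fF: "finite F" unfolding F_def by simp
  have nF: "n - 1 \<notin> F" unfolding F_def by simp
  have dj: "{..<k} \<inter> insert (n - 1) F = {}" using assms(2) unfolding F_def by auto
  have "card ({..<k} \<union> insert (n - 1) F) = k + card (insert (n - 1) F)"
    using card_Un_disjoint[OF _ _ dj] fF by simp
  also have "\<dots> = k + 1 + card F" using fF nF by simp
  finally show ?thesis using eq cnt_card[of w] unfolding F_def by simp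
qed

lemma card_W:
  assumes "k < d" "d \<le> n"
  shows "card (Wset n d k) = (n - k - 1) choose (d - k - 1)"
proof -
  define f where "f = (\<lambda>w::letter list. {i. k \<le> i \<and> i < n - 1 \<and> w ! i = S})"
  define g where "g = (\<lambda>A. map (\<lambda>i. if i < k \<or> i = n - 1 \<or> i \<in> A then S else D) [0..<n])"
  define SS where "SS = {A. A \<subseteq> {k..<n - 1} \<and> card A = d - k - 1}"
  have kn: "k < n" using assms by simp
  have gnth: "g A ! i = (if i < k \<or> i = n - 1 \<or> i \<in> A then S else D)" if "i < n" for A i
    using that unfolding g_def by simp
  have glen: "length (g A) = n" for A unfolding g_def by simp
  have fg: "f (g A) = A" if "A \<subseteq> {k..<n - 1}" for A
  proof (rule set_eqI)
    fix i
    show "i \<in> f (g A) \<longleftrightarrow> i \<in> A"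
    proof (cases "k \<le> i \<and> i < n - 1")
      case True
      then have "i < n" by arith
      then have "g A ! i = (if i \<in> A then S else D)" using gnth[of i A] True by simp
      then show ?thesis using True unfolding f_def by simp
    next
      case False
      then show ?thesis using that unfolding f_def by auto
    qed
  qed
  have lastS: "w ! (n - 1) = S" if "w \<in> Wset n d k" for w
    using that kn unfolding Wset_def threshold_word_def by (auto simp: last_conv_nth)
  have "bij_betw f (Wset n d k) SS"
  proof (rule bij_betw_byWitness[where f'=g])
    show "\<forall>w\<in>Wset n d k. g (f w) = w"
    proof
      fix w assume w: "w \<in> Wset n d k"
      have lw: "length w = n" using w unfolding Wset_def by simp
      show "g (f w) = w"
      proof (rule nth_equalityI)
        show "length (g (f w)) = length w" using glen lw by simp
        fix i assume "i < length (g (f w))"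
        then have i: "i < n" using glen by simp
        show "g (f w) ! i = w ! i"
          using gnth[OF i, of "f w"] i w lastS[OF w] unfolding f_def Wset_def
          by (cases "w ! i") auto
      qed
    qed
    show "\<forall>A\<in>SS. f (g A) = A" using fg unfolding SS_def by auto
    show "f ` Wset n d k \<subseteq> SS"
    proof
      fix A assume "A \<in> f ` Wset n d k"
      then obtain w where w: "w \<in> Wset n d k" "A = f w" by auto
      have "cntS w = k + 1 + card A"
        using cnt_decomp[of w n k] w lastS[OF w(1)] kn unfolding Wset_def f_def by simp
      then have "card A = d - k - 1" using w(1) unfolding Wset_def by auto
      moreover have "A \<subseteq> {k..<n - 1}" using w(2) unfolding f_def by auto
      ultimately show "A \<in> SS" unfolding SS_def by simp
    qed
    show "g ` SS \<subseteq> Wset n d k"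
    proof
      fix w assume "w \<in> g ` SS"
      then obtain A where A: "A \<in> SS" "w = g A" by auto
      have lw: "length w = n" using A glen by simp
      have wl: "w ! (n - 1) = S" using gnth[of "n - 1" A] A(2) kn by simp
      have p: "\<forall>i<k. w ! i = S" using gnth A(2) kn by auto
      have ne: "w \<noteq> []" using lw kn by auto
      then have "last w = w ! (n - 1)" using lw by (simp add: last_conv_nth)
      then have th: "threshold_word w" unfolding threshold_word_def using ne wl by simp
      have "cntS w = k + 1 + card (f w)" using cnt_decomp[OF lw kn p wl] unfolding f_def by simp
      also have "f w = A" using fg A unfolding SS_def by simp
      finally have "cntS w = d" using A(1) assms unfolding SS_def by simp
      then show "w \<in> Wset n d k" unfolding Wset_def using th lw p by simp
    qed
  qed
  then have "card (Wset n d k) = card SS" by (rule bij_betw_same_card)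
  also have "\<dots> = card {k..<n - 1} choose (d - k - 1)" unfolding SS_def by (rule n_subsets) simp
  also have "card {k..<n - 1} = n - k - 1" by simp
  finally show ?thesis .
qed

theorem mainTheorem4:
  fixes n d k :: nat
  assumes "k < d" and "d \<le> n"
  shows "bij_betw bvec (Tset n d k) (Bset n d k)
    \<and> card (Tset n d k) = (n - k - 1) choose (d - k - 1)
    \<and> card (Bset n d k) = (n - k - 1) choose (d - k - 1)"
proof -
  have b: "bij_betw bvec (Tset n d k) (Bset n d k)" using bij_W[OF assms(1)] Tset_eq[OF assms(1)] by simp
  have c: "card (Tset n d k) = (n - k - 1) choose (d - k - 1)" using card_W[OF assms] Tset_eq[OF assms(1)] by simp
  have "card (Bset n d k) = card (Tset n d k)" using bij_betw_same_card[OF b] by simp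
  then show ?thesis using b c by simp
qed

end
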